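(* Let $X_n=(\mathbb{C}^n,\|\cdot\|_{X_n})$ be a Banach lattice, $J\subset\mathbb{N}_0^n$, and $\alpha\in\Lambda(m,n)$. Then (i) $c_{X_n}(\alpha)\,c_{X_n'}(\alpha)\le\frac{m^m}{\alpha^\alpha}$; (ii) $c_{X_n}(\alpha)\le\frac{\|\alpha\|_{X_n}^m}{\alpha^\alpha}$.
   Context: A Banach lattice $X_n=(\mathbb{C}^n,\|\cdot\|)$ is a norm with $\|z\|\le\|w\|$ whenever $|z_k|\le|w_k|$ for all $k$. $X_n'$ is its Köthe dual: $\mathbb{C}^n$ with $\|x\|_{X_n'}=\sup\{\sum_k|x_ky_k|:\|y\|_{X_n}\le1\}$. $\Lambda(m,n)=\{\alpha\in\mathbb{N}_0^n:|\alpha|=m\}$, $\alpha^\alpha=\prod_i\alpha_i^{\alpha_i}$ (with $0^0=1$), and $\|\alpha\|_{X_n}$ is the norm of $(\alpha_1,\dots,\alpha_n)$ in $X_n$. For a normed space $Y_n=(\mathbb{C}^n,\|\cdot\|)$, $c_{Y_n}(\alpha)=1/\sup_{z\in B_{Y_n}}|z^\alpha|$, $B_{Y_n}$ the open unit ball. *)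

theory Defs
  imports "HOL-Analysis.Analysis"
begin

definition is_cnorm :: "(('n::finite \<Rightarrow> complex) \<Rightarrow> real) \<Rightarrow> bool" where
  "is_cnorm N \<longleftrightarrow>
     (\<forall>x. 0 \<le> N x) \<and> (\<forall>x. N x = 0 \<longleftrightarrow> x = (\<lambda>_. 0)) \<and>
     (\<forall>c x. N (\<lambda>k. c * x k) = cmod c * N x) \<and>
     (\<forall>x y. N (\<lambda>k. x k + y k) \<le> N x + N y)"

text \<open>Banach lattice on C^n (completeness is automatic in finite dimension).\<close>
definition banach_lattice :: "(('n::finite \<Rightarrow> complex) \<Rightarrow> real) \<Rightarrow> bool" where
  "banach_lattice N \<longleftrightarrow> is_cnorm N \<and>
     (\<forall>z w. (\<forall>k. cmod (z k) \<le> cmod (w k)) \<longrightarrow> N z \<le> N w)"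

definition kothe_dual :: "(('n::finite \<Rightarrow> complex) \<Rightarrow> real) \<Rightarrow> ('n \<Rightarrow> complex) \<Rightarrow> real" where
  "kothe_dual N x = Sup {(\<Sum>k\<in>UNIV. cmod (x k * y k)) | y. N y \<le> 1}"

definition monom_c :: "('n::finite \<Rightarrow> complex) \<Rightarrow> ('n \<Rightarrow> nat) \<Rightarrow> complex" where
  "monom_c z \<alpha> = (\<Prod>k\<in>UNIV. z k ^ \<alpha> k)"

definition c_coef :: "(('n::finite \<Rightarrow> complex) \<Rightarrow> real) \<Rightarrow> ('n \<Rightarrow> nat) \<Rightarrow> real" where
  "c_coef N \<alpha> = 1 / Sup {cmod (monom_c z \<alpha>) | z. N z < 1}"

text \<open>alpha^alpha with 0^0 = 1.\<close>
definition alpha_pow :: "('n::finite \<Rightarrow> nat) \<Rightarrow> real" where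
  "alpha_pow \<alpha> = (\<Prod>k\<in>UNIV. real (\<alpha> k) ^ \<alpha> k)"

end

theory Submission
  imports Defs
begin

lemma bl_basic:
  assumes "banach_lattice N"
  shows bl_nonneg: "0 \<le> N x"
    and bl_zero: "N (\<lambda>_. 0) = 0"
    and bl_zero_iff: "N x = 0 \<longleftrightarrow> x = (\<lambda>_. 0)"
    and bl_scale: "N (\<lambda>k. c * x k) = cmod c * N x"
    and bl_tri: "N (\<lambda>k. x k + y k) \<le> N x + N y"
    and bl_mono: "(\<And>k. cmod (z k) \<le> cmod (w k)) \<Longrightarrow> N z \<le> N w"
  using assms unfolding banach_lattice_def is_cnorm_def by auto

lemma bl_abs:
  assumes "banach_lattice N"
  shows "N (\<lambda>k. complex_of_real (cmod (z k))) = N z"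
  using bl_mono[OF assms, of z "\<lambda>k. complex_of_real (cmod (z k))"]
        bl_mono[OF assms, of "\<lambda>k. complex_of_real (cmod (z k))" z]
  by (simp add: abs_of_nonneg)

lemma bl_unit_pos:
  assumes "banach_lattice N"
  shows "N (\<lambda>i. if i = k then 1 else 0) > 0"
proof -
  have "(\<lambda>i. if i = k then (1::complex) else 0) \<noteq> (\<lambda>_. 0)"
    by (metis one_neq_zero)
  then show ?thesis using bl_zero_iff[OF assms] bl_nonneg[OF assms]
    by (metis order_le_less)
qed

lemma bl_coord:
  assumes "banach_lattice N"
  shows "cmod (z k) * N (\<lambda>i. if i = k then 1 else 0) \<le> N z"
proof -
  have "N (\<lambda>i. z k * (if i = k then 1 else 0)) \<le> N z"
    by (rule bl_mono[OF assms]) auto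
  then show ?thesis by (simp add: bl_scale[OF assms])
qed

lemma bl_sum:
  assumes "banach_lattice N" and "finite A"
  shows "N (\<lambda>i. \<Sum>k\<in>A. f k i) \<le> (\<Sum>k\<in>A. N (f k))"
  using assms(2)
proof (induction A rule: finite_induct)
  case empty
  then show ?case using bl_zero[OF assms(1)] by simp
next
  case (insert a A)
  have "N (\<lambda>i. \<Sum>k\<in>insert a A. f k i) = N (\<lambda>i. f a i + (\<Sum>k\<in>A. f k i))"
    using insert by simp
  also have "\<dots> \<le> N (f a) + N (\<lambda>i. \<Sum>k\<in>A. f k i)"
    using bl_tri[OF assms(1), of "f a"] by simp
  also have "\<dots> \<le> N (f a) + (\<Sum>k\<in>A. N (f k))" using insert by simp
  finally show ?case using insert by simp
qed

lemma bl_upper: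
  fixes N :: "('n::finite \<Rightarrow> complex) \<Rightarrow> real"
  assumes "banach_lattice N"
  shows "N z \<le> (\<Sum>k\<in>UNIV. cmod (z k) * N (\<lambda>i. if i = k then 1 else 0))"
proof -
  have "z = (\<lambda>i. \<Sum>k\<in>UNIV. z k * (if i = k then 1 else 0))"
    by (auto simp: if_distrib cong: if_cong)
  then have "N z = N (\<lambda>i. \<Sum>k\<in>UNIV. (\<lambda>k i. z k * (if i = k then 1 else 0)) k i)" by simp
  also have "\<dots> \<le> (\<Sum>k\<in>UNIV. N (\<lambda>i. z k * (if i = k then 1 else 0)))"
    by (rule bl_sum[OF assms]) simp
  also have "\<dots> = (\<Sum>k\<in>UNIV. cmod (z k) * N (\<lambda>i. if i = k then 1 else 0))"
    by (simp add: bl_scale[OF assms])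
  finally show ?thesis .
qed

lemma bl_diff:
  assumes "banach_lattice N"
  shows "N x - N y \<le> N (\<lambda>k. x k - y k)"
proof -
  have "N x = N (\<lambda>k. (x k - y k) + y k)" by simp
  also have "\<dots> \<le> N (\<lambda>k. x k - y k) + N y" by (rule bl_tri[OF assms])
  finally show ?thesis by simp
qed

lemma bl_diff_sym:
  assumes "banach_lattice N"
  shows "N (\<lambda>k. x k - y k) = N (\<lambda>k. y k - x k)"
proof -
  have "(\<lambda>k. y k - x k) = (\<lambda>k. (-1) * (x k - y k))" by auto
  then have "N (\<lambda>k. y k - x k) = cmod (-1) * N (\<lambda>k. x k - y k)"
    using bl_scale[OF assms, of "-1" "\<lambda>k. x k - y k"] by simp
  then show ?thesis by simp
qed

lemma exists_max:
  fixes N :: "('n::finite \<Rightarrow> complex) \<Rightarrow> real" and F :: "('n \<Rightarrow> complex) \<Rightarrow> real"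
  assumes bl: "banach_lattice N"
    and F: "F = (\<lambda>z. \<Prod>k\<in>UNIV. cmod (z k) ^ \<alpha> k)"
  shows "\<exists>z0. N z0 \<le> 1 \<and> (\<forall>z. N z \<le> 1 \<longrightarrow> F z \<le> F z0)"
proof -
  define e where "e k = N (\<lambda>i. if i = k then 1 else 0)" for k
  have epos: "e k > 0" for k unfolding e_def by (rule bl_unit_pos[OF bl])
  define C where "C = (\<Sum>k\<in>UNIV. e k)"
  define g where "g v = N (vec_nth v)" for v :: "complex^'n"
  have lip: "C-lipschitz_on UNIV g"
    unfolding lipschitz_on_def
  proof (intro conjI ballI)
    show "0 \<le> C" unfolding C_def using epos by (simp add: sum_nonneg less_imp_le)
    fix x y :: "complex^'n"
    have 1: "N (\<lambda>k. x$k - y$k) \<le> C * dist x y"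
    proof -
      have "N (\<lambda>k. x$k - y$k) \<le> (\<Sum>k\<in>UNIV. cmod (x$k - y$k) * e k)"
        unfolding e_def by (rule bl_upper[OF bl])
      also have "\<dots> \<le> (\<Sum>k\<in>UNIV. dist x y * e k)"
      proof (rule sum_mono)
        fix k
        have "norm ((x - y)$k) \<le> norm (x - y)" by (rule Finite_Cartesian_Product.norm_nth_le)
        then have "cmod (x$k - y$k) \<le> dist x y" by (simp add: dist_norm)
        then show "cmod (x$k - y$k) * e k \<le> dist x y * e k"
          using epos[of k] by (simp add: mult_right_mono)
      qed
      also have "\<dots> = C * dist x y" unfolding C_def by (simp add: sum_distrib_right mult.commute)
      finally show ?thesis .
    qed
    have "N (vec_nth x) - N (vec_nth y) \<le> N (\<lambda>k. x$k - y$k)"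
      using bl_diff[OF bl, of "vec_nth x" "vec_nth y"] by simp
    moreover have "N (vec_nth y) - N (vec_nth x) \<le> N (\<lambda>k. x$k - y$k)"
      using bl_diff[OF bl, of "vec_nth y" "vec_nth x"] bl_diff_sym[OF bl, of "vec_nth x" "vec_nth y"] by simp
    ultimately show "dist (g x) (g y) \<le> C * dist x y"
      using 1 unfolding g_def dist_real_def by linarith
  qed
  have contg: "continuous_on UNIV g" by (rule lipschitz_on_continuous_on[OF lip])
  have vl: "vec_nth (vec_lambda f) = f" for f :: "'n \<Rightarrow> complex" by (rule ext) simp
  define S where "S = {v. g v \<le> 1}"
  have closedS: "closed S" unfolding S_def
    by (rule closed_Collect_le[OF contg]) simp
  have boundS: "bounded S"
  proof -
    have "norm v \<le> (\<Sum>k\<in>UNIV. 1 / e k)" if "v \<in> S" for v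
    proof -
      have "norm v \<le> (\<Sum>k\<in>UNIV. norm (v$k))"
        unfolding norm_vec_def by (rule L2_set_le_sum) simp
      also have "\<dots> \<le> (\<Sum>k\<in>UNIV. 1 / e k)"
      proof (rule sum_mono)
        fix k
        have "cmod (v$k) * e k \<le> 1"
          using bl_coord[OF bl, of "vec_nth v" k] that unfolding S_def g_def e_def by simp
        then show "norm (v$k) \<le> 1 / e k" using epos[of k] by (simp add: field_simps)
      qed
      finally show ?thesis .
    qed
    then show ?thesis unfolding bounded_iff by blast
  qed
  have cS: "compact S" using closedS boundS by (simp add: compact_eq_bounded_closed)
  have neS: "S \<noteq> {}"
  proof -
    have "vec_lambda (\<lambda>_. 0) \<in> S" unfolding S_def g_def using bl_zero[OF bl] by (simp add: vl)
    then show ?thesis by blast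
  qed
  have coS: "continuous_on S (\<lambda>v. F (vec_nth v))"
    unfolding F
    apply (rule continuous_on_prod)
    apply (rule continuous_on_power)
    apply (rule continuous_on_norm)
    apply (rule continuous_on_component)
    apply (rule continuous_on_id)
    done
  obtain v0 where v0S: "v0 \<in> S" and v0M: "\<forall>v\<in>S. F (vec_nth v) \<le> F (vec_nth v0)"
    using continuous_attains_sup[OF cS neS coS] by (elim bexE)
  have v0: "v0 \<in> S" "\<And>v. v \<in> S \<Longrightarrow> F (vec_nth v) \<le> F (vec_nth v0)"
    using v0S v0M by auto
  show ?thesis
  proof (intro exI conjI allI impI)
    show "N (vec_nth v0) \<le> 1" using v0(1) unfolding S_def g_def by simp
    fix z assume "N z \<le> 1"
    then have "vec_lambda z \<in> S" unfolding S_def g_def by (simp add: vl)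
    from v0(2)[OF this] show "F z \<le> F (vec_nth v0)" by (simp only: vl)
  qed
qed


lemma ln_lower: "0 < (y::real) \<Longrightarrow> 1 - 1 / y \<le> ln y"
proof -
  assume y: "0 < y"
  have "ln (1 / y) \<le> 1 / y - 1" using y by (intro ln_le_minus_one) simp
  then show ?thesis using y by (simp add: ln_div)
qed

lemma variational:
  fixes N :: "('n::finite \<Rightarrow> complex) \<Rightarrow> real" and F :: "('n \<Rightarrow> complex) \<Rightarrow> real"
  assumes bl: "banach_lattice N"
    and F: "F = (\<lambda>z. \<Prod>k\<in>UNIV. cmod (z k) ^ \<alpha> k)"
    and z0: "N z0 \<le> 1" and mx: "\<forall>z. N z \<le> 1 \<longrightarrow> F z \<le> F z0"
    and pos: "F z0 > 0" and y: "N y \<le> 1"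
  shows "(\<Sum>k\<in>UNIV. real (\<alpha> k) * cmod (y k) / cmod (z0 k)) \<le> (\<Sum>k\<in>UNIV. real (\<alpha> k))"
proof -
  define a where "a k = cmod (z0 k)" for k
  define b where "b k = cmod (y k)" for k
  define c where "c k = (b k - a k) / a k" for k
  have a0: "a k \<ge> 0" for k unfolding a_def by simp
  have b0: "b k \<ge> 0" for k unfolding b_def by simp
  have apos: "a k > 0" if "\<alpha> k > 0" for k
  proof -
    have "F z0 \<noteq> 0" using pos by simp
    then have "a k ^ \<alpha> k \<noteq> 0" unfolding F a_def by (simp add: prod_zero_iff)
    then show ?thesis using a0[of k] that by (simp add: order_le_less)
  qed
  have cge: "c k \<ge> -1" for k
  proof (cases "a k = 0")
    case True then show ?thesis unfolding c_def by simp
  next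
    case False
    then have "a k > 0" using a0[of k] by simp
    then show ?thesis unfolding c_def using b0[of k] by (simp add: field_simps)
  qed
  have Fz0: "F z0 = (\<Prod>k\<in>UNIV. a k ^ \<alpha> k)" unfolding F a_def by simp
  define g where "g t = (\<Sum>k\<in>UNIV. real (\<alpha> k) * (c k / (1 + t * c k)))" for t
  have gle: "g t \<le> 0" if t: "0 < t" "t < 1" for t
  proof -
    have den: "1 + t * c k > 0" for k
    proof -
      have "t * c k \<ge> t * (-1)" using cge[of k] t by (intro mult_left_mono) auto
      then show ?thesis using t by simp
    qed
    define v where "v k = complex_of_real ((1 - t) * a k + t * b k)" for k
    have "N v \<le> N (\<lambda>k. complex_of_real (1 - t) * complex_of_real (a k))
               + N (\<lambda>k. complex_of_real t * complex_of_real (b k))"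
      unfolding v_def using bl_tri[OF bl, of "\<lambda>k. complex_of_real (1 - t) * complex_of_real (a k)"
                                   "\<lambda>k. complex_of_real t * complex_of_real (b k)"]
      by simp
    also have "\<dots> = (1 - t) * N z0 + t * N y"
    proof -
      have "cmod (complex_of_real (1 - t)) = 1 - t" using t by (simp only: norm_of_real)
      then show ?thesis unfolding bl_scale[OF bl] a_def b_def bl_abs[OF bl] using t by simp
    qed
    also have "\<dots> \<le> (1 - t) * 1 + t * 1"
      using z0 y t by (intro add_mono mult_left_mono) auto
    finally have "N v \<le> 1" by simp
    then have "F v \<le> F z0" using mx by blast
    moreover have "F v = F z0 * (\<Prod>k\<in>UNIV. (1 + t * c k) ^ \<alpha> k)"
    proof -
      have "cmod (v k) ^ \<alpha> k = a k ^ \<alpha> k * (1 + t * c k) ^ \<alpha> k" for k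
      proof (cases "\<alpha> k = 0")
        case True then show ?thesis by simp
      next
        case False
        then have ak: "a k > 0" using apos by simp
        have "cmod (v k) = \<bar>(1 - t) * a k + t * b k\<bar>"
          unfolding v_def by (simp only: norm_of_real)
        also have "\<dots> = (1 - t) * a k + t * b k"
          using t a0[of k] b0[of k] by simp
        also have "\<dots> = a k * (1 + t * c k)" unfolding c_def using ak by (simp add: field_simps)
        finally show ?thesis by (simp add: power_mult_distrib)
      qed
      then have "F v = (\<Prod>k\<in>UNIV. a k ^ \<alpha> k * (1 + t * c k) ^ \<alpha> k)"
        unfolding F by simp
      also have "\<dots> = F z0 * (\<Prod>k\<in>UNIV. (1 + t * c k) ^ \<alpha> k)"
        unfolding Fz0 by (rule prod.distrib)
      finally show ?thesis .
    qed
    ultimately have "F z0 * (\<Prod>k\<in>UNIV. (1 + t * c k) ^ \<alpha> k) \<le> F z0 * 1" by simp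
    then have P: "(\<Prod>k\<in>UNIV. (1 + t * c k) ^ \<alpha> k) \<le> 1"
      using pos by (simp only: mult_le_cancel_left_pos)
    have Ppos: "(\<Prod>k\<in>UNIV. (1 + t * c k) ^ \<alpha> k) > 0"
      using den by (intro prod_pos) simp
    have "ln (\<Prod>k\<in>UNIV. (1 + t * c k) ^ \<alpha> k) \<le> 0" using P Ppos by simp
    then have L: "(\<Sum>k\<in>UNIV. real (\<alpha> k) * ln (1 + t * c k)) \<le> 0"
    proof -
      have "ln (\<Prod>k\<in>UNIV. (1 + t * c k) ^ \<alpha> k) = (\<Sum>k\<in>UNIV. ln ((1 + t * c k) ^ \<alpha> k))"
        by (rule ln_prod) (use den in \<open>auto dest: less_irrefl_nat\<close>, metis less_irrefl den)
      also have "\<dots> = (\<Sum>k\<in>UNIV. real (\<alpha> k) * ln (1 + t * c k))"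
        by (rule sum.cong) (use den in \<open>auto simp: ln_realpow\<close>)
      finally show ?thesis using \<open>ln (\<Prod>k\<in>UNIV. (1 + t * c k) ^ \<alpha> k) \<le> 0\<close> by simp
    qed
    have "(\<Sum>k\<in>UNIV. real (\<alpha> k) * (t * c k / (1 + t * c k))) \<le> (\<Sum>k\<in>UNIV. real (\<alpha> k) * ln (1 + t * c k))"
    proof (rule sum_mono)
      fix k
      have "1 - 1 / (1 + t * c k) \<le> ln (1 + t * c k)" by (rule ln_lower[OF den])
      moreover have "1 - 1 / (1 + t * c k) = t * c k / (1 + t * c k)"
        using den[of k] by (simp add: field_simps)
      ultimately show "real (\<alpha> k) * (t * c k / (1 + t * c k)) \<le> real (\<alpha> k) * ln (1 + t * c k)"
        by (intro mult_left_mono) auto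
    qed
    also note L
    finally have "t * g t \<le> 0" unfolding g_def by (simp add: sum_distrib_left algebra_simps)
    then show ?thesis using t by (simp add: mult_le_0_iff)
  qed
  have lim: "(g \<longlongrightarrow> g 0) (at_right 0)"
    unfolding g_def by (intro tendsto_intros) auto
  have ev: "eventually (\<lambda>t. g t \<le> 0) (at_right (0::real))"
  proof -
    have "eventually (\<lambda>t. t \<in> {0<..<1}) (at_right (0::real))"
      by (rule eventually_at_right_real) simp
    then show ?thesis by eventually_elim (auto intro: gle)
  qed
  have "g 0 \<le> 0" by (rule tendsto_upperbound[OF lim ev]) simp
  moreover have "g 0 = (\<Sum>k\<in>UNIV. real (\<alpha> k) * cmod (y k) / cmod (z0 k)) - (\<Sum>k\<in>UNIV. real (\<alpha> k))"
  proof -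
    have "real (\<alpha> k) * (c k / (1 + 0 * c k)) = real (\<alpha> k) * cmod (y k) / cmod (z0 k) - real (\<alpha> k)" for k
    proof (cases "\<alpha> k = 0")
      case True then show ?thesis by simp
    next
      case False
      then have ak: "a k > 0" using apos by simp
      then show ?thesis unfolding c_def a_def b_def by (simp add: field_simps)
    qed
    then show ?thesis unfolding g_def by (simp add: sum_subtractf)
  qed
  ultimately show ?thesis by simp
qed


lemma sup_scale:
  fixes M T :: real
  assumes "\<And>r. 0 < r \<Longrightarrow> r < 1 \<Longrightarrow> r ^ m * M \<le> T"
  shows "M \<le> T"
proof -
  have lim: "((\<lambda>r. r ^ m * M) \<longlongrightarrow> 1 ^ m * M) (at_left (1::real))"
    by (intro tendsto_intros)
  have "eventually (\<lambda>r. r \<in> {0<..<1}) (at_left (1::real))"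
    by (rule eventually_at_left_real) simp
  then have ev: "eventually (\<lambda>r. r ^ m * M \<le> T) (at_left (1::real))"
    by eventually_elim (use assms in auto)
  have "1 ^ m * M \<le> T" by (rule tendsto_upperbound[OF lim ev]) simp
  then show ?thesis by simp
qed

lemma prodpow_scale:
  fixes z :: "'n::finite \<Rightarrow> complex"
  shows "(\<Prod>k\<in>UNIV. cmod (c * z k) ^ \<alpha> k) = cmod c ^ (\<Sum>k\<in>UNIV. \<alpha> k) * (\<Prod>k\<in>UNIV. cmod (z k) ^ \<alpha> k)"
  by (simp add: norm_mult power_mult_distrib prod.distrib power_sum)

lemma monom_norm: "cmod (monom_c z \<alpha>) = (\<Prod>k\<in>UNIV. cmod (z k) ^ \<alpha> k)"
  unfolding monom_c_def by (simp add: prod_norm[symmetric] norm_power)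

theorem theorem2p19:
  fixes N :: "('n::finite \<Rightarrow> complex) \<Rightarrow> real"
    and \<alpha> :: "'n \<Rightarrow> nat" and m :: nat
  assumes "banach_lattice N"
    and "(\<Sum>k\<in>UNIV. \<alpha> k) = m"
  shows "c_coef N \<alpha> * c_coef (kothe_dual N) \<alpha> \<le> real m ^ m / alpha_pow \<alpha>
     \<and> c_coef N \<alpha> \<le> (N (\<lambda>k. complex_of_nat (\<alpha> k))) ^ m / alpha_pow \<alpha>"
proof -
  note bl = assms(1)
  define F where "F = (\<lambda>z::'n \<Rightarrow> complex. \<Prod>k\<in>UNIV. cmod (z k) ^ \<alpha> k)"
  have Fsc: "F (\<lambda>k. c * z k) = cmod c ^ m * F z" for c z
    unfolding F_def prodpow_scale assms(2) ..
  have Fm: "cmod (monom_c z \<alpha>) = F z" for z unfolding F_def by (rule monom_norm)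
  obtain z0 where z0: "N z0 \<le> 1" and mx: "\<forall>z. N z \<le> 1 \<longrightarrow> F z \<le> F z0"
    using exists_max[OF bl F_def] by blast
  define M where "M = F z0"
  define e where "e k = N (\<lambda>i. if i = k then 1 else 0)" for k
  have epos: "e k > 0" for k unfolding e_def by (rule bl_unit_pos[OF bl])
  define al where "al = (\<lambda>k. complex_of_nat (\<alpha> k))"
  have ap_pos: "alpha_pow \<alpha> > 0" unfolding alpha_pow_def
    by (intro prod_pos) (auto simp: zero_less_power)
  have Fal: "F al = alpha_pow \<alpha>" unfolding F_def al_def alpha_pow_def by simp
  have Nal: "N al > 0 \<or> m = 0"
  proof (cases "m = 0")
    case False
    then obtain k where "\<alpha> k \<noteq> 0" using assms(2) by fastforce
    then have "al \<noteq> (\<lambda>_. 0)" unfolding al_def by (metis of_nat_eq_0_iff)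
    then show ?thesis using bl_zero_iff[OF bl, of al] bl_nonneg[OF bl, of al] by auto
  qed simp
  define A2 where "A2 = (1 / N al) ^ m * alpha_pow \<alpha>"
  have A2pos: "A2 > 0" unfolding A2_def using Nal ap_pos by auto
  have A2le: "A2 \<le> M"
  proof -
    have "N (\<lambda>k. complex_of_real (1 / N al) * al k) \<le> 1"
    proof (cases "N al = 0")
      case True then show ?thesis using bl_scale[OF bl] bl_zero[OF bl] by simp
    next
      case False
      have "N (\<lambda>k. complex_of_real (1 / N al) * al k) = cmod (complex_of_real (1 / N al)) * N al"
        by (rule bl_scale[OF bl])
      also have "\<dots> = 1" using False bl_nonneg[OF bl, of al] by (simp only: norm_of_real) simp
      finally show ?thesis by simp
    qed
    then have "F (\<lambda>k. complex_of_real (1 / N al) * al k) \<le> M" using mx unfolding M_def by blast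
    moreover have "cmod (complex_of_real (1 / N al)) = 1 / N al"
      using bl_nonneg[OF bl, of al] by (simp only: norm_of_real) simp
    ultimately show ?thesis unfolding Fsc Fal A2_def by simp
  qed
  have Mpos: "M > 0" using A2pos A2le by simp
  define S1 where "S1 = {cmod (monom_c z \<alpha>) | z. N z < 1}"
  have bdd1: "bdd_above S1" unfolding S1_def bdd_above_def
    by (rule exI[of _ M]) (auto simp: Fm M_def mx)
  have S1ge: "M \<le> Sup S1"
  proof (rule sup_scale)
    fix r :: real assume r: "0 < r" "r < 1"
    have "N (\<lambda>k. complex_of_real r * z0 k) = r * N z0" using bl_scale[OF bl] r by simp
    also have "\<dots> \<le> r" using z0 r by (intro mult_left_le) auto
    also have "\<dots> < 1" using r by simp
    finally have "cmod (monom_c (\<lambda>k. complex_of_real r * z0 k) \<alpha>) \<in> S1" unfolding S1_def by blast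
    then have "cmod (monom_c (\<lambda>k. complex_of_real r * z0 k) \<alpha>) \<le> Sup S1" by (rule cSup_upper[OF _ bdd1])
    then show "r ^ m * M \<le> Sup S1" unfolding Fm Fsc M_def using r by simp
  qed
  define w where "w k = complex_of_real (real (\<alpha> k) / (real m * cmod (z0 k)))" for k
  have wn: "cmod (w k) = real (\<alpha> k) / (real m * cmod (z0 k))" for k
  proof -
    have "cmod (w k) = \<bar>real (\<alpha> k) / (real m * cmod (z0 k))\<bar>" unfolding w_def by (simp only: norm_of_real)
    then show ?thesis by simp
  qed
  have wdual: "(\<Sum>k\<in>UNIV. cmod (w k * y k)) \<le> 1" if y: "N y \<le> 1" for y
  proof (cases "m = 0")
    case True then show ?thesis unfolding w_def by simp
  next
    case False
    have V: "(\<Sum>k\<in>UNIV. real (\<alpha> k) * cmod (y k) / cmod (z0 k)) \<le> (\<Sum>k\<in>UNIV. real (\<alpha> k))"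
      by (rule variational[OF bl F_def z0 mx _ y]) (use Mpos M_def in simp)
    have "(\<Sum>k\<in>UNIV. cmod (w k * y k)) = (\<Sum>k\<in>UNIV. real (\<alpha> k) * cmod (y k) / cmod (z0 k)) / real m"
      unfolding sum_divide_distrib by (rule sum.cong) (auto simp: norm_mult wn)
    also have "\<dots> \<le> (\<Sum>k\<in>UNIV. real (\<alpha> k)) / real m" using V by (simp add: divide_right_mono)
    also have "\<dots> = 1" using False assms(2) by (metis of_nat_sum divide_self_if of_nat_eq_0_iff)
    finally show ?thesis .
  qed
  define S2 where "S2 = {cmod (monom_c z \<alpha>) | z. kothe_dual N z < 1}"
  have bdd2: "bdd_above S2"
  proof -
    have "cmod (z k) \<le> e k" if kz: "kothe_dual N z < 1" for z k
    proof -
      define T where "T = {(\<Sum>k\<in>UNIV. cmod (z k * y k)) | y. N y \<le> 1}"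
      have bddT: "bdd_above T" unfolding T_def
      proof (rule bdd_aboveI[where M="\<Sum>k\<in>UNIV. cmod (z k) / e k"])
        fix x assume "x \<in> {(\<Sum>k\<in>UNIV. cmod (z k * y k)) | y. N y \<le> 1}"
        then obtain y where x: "x = (\<Sum>k\<in>UNIV. cmod (z k * y k))" and y: "N y \<le> 1" by blast
        have "cmod (z k * y k) \<le> cmod (z k) / e k" for k
        proof -
          have "cmod (y k) * e k \<le> 1" using bl_coord[OF bl, of y k] y unfolding e_def by simp
          then have "cmod (y k) \<le> 1 / e k" using epos[of k] by (simp add: field_simps)
          then show ?thesis by (simp add: norm_mult divide_inverse mult_left_mono)
        qed
        then show "x \<le> (\<Sum>k\<in>UNIV. cmod (z k) / e k)" unfolding x by (intro sum_mono)
      qed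
      define yk where "yk = (\<lambda>i. if i = k then complex_of_real (1 / e k) else 0)"
      have "yk = (\<lambda>i. complex_of_real (1 / e k) * (if i = k then 1 else 0))" unfolding yk_def by auto
      then have "N yk = cmod (complex_of_real (1 / e k)) * e k"
        using bl_scale[OF bl, of "complex_of_real (1 / e k)" "\<lambda>i. if i = k then 1 else 0"]
        unfolding e_def by simp
      also have "cmod (complex_of_real (1 / e k)) = 1 / e k"
        using epos[of k] by (simp only: norm_of_real) simp
      finally have "N yk = 1" using epos[of k] by simp
      then have "(\<Sum>i\<in>UNIV. cmod (z i * yk i)) \<in> T" unfolding T_def
        by (intro CollectI exI[of _ yk] conjI) auto
      moreover have "(\<Sum>i\<in>UNIV. cmod (z i * yk i)) = cmod (z k) / e k"
        unfolding yk_def using epos[of k] by (simp add: norm_mult norm_divide if_distrib cong: if_cong)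
      ultimately have "cmod (z k) / e k \<le> Sup T" using cSup_upper[OF _ bddT] by metis
      also have "Sup T < 1" using kz unfolding kothe_dual_def T_def .
      finally show ?thesis using epos[of k] by (simp add: field_simps)
    qed
    then show ?thesis unfolding S2_def bdd_above_def Fm F_def
      by (intro exI[of _ "\<Prod>k\<in>UNIV. e k ^ \<alpha> k"]) (auto intro!: prod_mono power_mono)
  qed
  have Fw: "F w * M * real m ^ m = alpha_pow \<alpha>"
  proof -
    have f: "cmod (w k) ^ \<alpha> k * cmod (z0 k) ^ \<alpha> k * real m ^ \<alpha> k = real (\<alpha> k) ^ \<alpha> k" for k
    proof (cases "\<alpha> k = 0")
      case True then show ?thesis by simp
    next
      case False
      have "cmod (z0 k) > 0"
      proof -
        have "M \<noteq> 0" using Mpos by simp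
        then have "cmod (z0 k) ^ \<alpha> k \<noteq> 0" unfolding M_def F_def by (simp add: prod_zero_iff)
        then show ?thesis using False by simp
      qed
      moreover have "m > 0"
      proof -
        have "\<alpha> k \<le> (\<Sum>k\<in>UNIV. \<alpha> k)" by (rule member_le_sum) auto
        then show ?thesis using False assms(2) by simp
      qed
      ultimately have "real (\<alpha> k) / (real m * cmod (z0 k)) * cmod (z0 k) * real m = real (\<alpha> k)"
        by (simp add: field_simps)
      then show ?thesis unfolding wn by (metis power_mult_distrib)
    qed
    have "F w * M * real m ^ m = (\<Prod>k\<in>UNIV. cmod (w k) ^ \<alpha> k * cmod (z0 k) ^ \<alpha> k * real m ^ \<alpha> k)"
      unfolding F_def M_def prod.distrib power_sum[symmetric] assms(2) ..
    also have "\<dots> = alpha_pow \<alpha>" unfolding alpha_pow_def f ..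
    finally show ?thesis .
  qed
  have S2ge: "F w \<le> Sup S2"
  proof (rule sup_scale)
    fix r :: real assume r: "0 < r" "r < 1"
    have "kothe_dual N (\<lambda>k. complex_of_real r * w k) \<le> r"
      unfolding kothe_dual_def
    proof (rule cSup_least)
      show "{(\<Sum>k\<in>UNIV. cmod (complex_of_real r * w k * y k)) | y. N y \<le> 1} \<noteq> {}"
        using bl_zero[OF bl] by (metis (mono_tags, lifting) empty_Collect_eq zero_le_one)
      fix x assume "x \<in> {(\<Sum>k\<in>UNIV. cmod (complex_of_real r * w k * y k)) | y. N y \<le> 1}"
      then obtain y where x: "x = (\<Sum>k\<in>UNIV. cmod (complex_of_real r * w k * y k))" and y: "N y \<le> 1" by blast
      have "x = r * (\<Sum>k\<in>UNIV. cmod (w k * y k))"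
        unfolding x sum_distrib_left using r by (simp add: norm_mult mult.assoc)
      also have "\<dots> \<le> r * 1" using wdual[OF y] r by (intro mult_left_mono) auto
      finally show "x \<le> r" by simp
    qed
    then have "kothe_dual N (\<lambda>k. complex_of_real r * w k) < 1" using r by simp
    then have "cmod (monom_c (\<lambda>k. complex_of_real r * w k) \<alpha>) \<in> S2" unfolding S2_def by blast
    then have "cmod (monom_c (\<lambda>k. complex_of_real r * w k) \<alpha>) \<le> Sup S2" by (rule cSup_upper[OF _ bdd2])
    then show "r ^ m * F w \<le> Sup S2" unfolding Fm Fsc using r by simp
  qed
  have mm: "real m ^ m > 0" by (cases "m = 0") auto
  have Fwpos: "F w > 0"
  proof -
    have "F w \<ge> 0" unfolding F_def by (simp add: prod_nonneg)
    moreover have "F w \<noteq> 0" using Fw ap_pos by auto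
    ultimately show ?thesis by simp
  qed
  have c1: "c_coef N \<alpha> = 1 / Sup S1" unfolding c_coef_def S1_def ..
  have c2: "c_coef (kothe_dual N) \<alpha> = 1 / Sup S2" unfolding c_coef_def S2_def ..
  have i1: "1 / Sup S1 \<le> 1 / M" using S1ge Mpos by (simp add: frac_le)
  have i2: "1 / Sup S2 \<le> 1 / F w" using S2ge Fwpos by (simp add: frac_le)
  have "c_coef N \<alpha> * c_coef (kothe_dual N) \<alpha> \<le> 1 / M * (1 / F w)"
    unfolding c1 c2 using i1 i2 S1ge S2ge Mpos Fwpos by (intro mult_mono) auto
  also have "\<dots> = real m ^ m / (F w * M * real m ^ m)"
    using mm Mpos Fwpos by simp
  also have "\<dots> = real m ^ m / alpha_pow \<alpha>" by (simp only: Fw)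
  finally have part1: "c_coef N \<alpha> * c_coef (kothe_dual N) \<alpha> \<le> real m ^ m / alpha_pow \<alpha>" .
  have "c_coef N \<alpha> \<le> 1 / A2"
    unfolding c1 using i1 A2le A2pos Mpos by (meson divide_left_mono order_trans zero_le_one mult_pos_pos)
  also have "1 / A2 = (N al) ^ m / alpha_pow \<alpha>"
  proof (cases "m = 0")
    case True then show ?thesis unfolding A2_def by simp
  next
    case False
    then have "N al > 0" using Nal by simp
    then show ?thesis unfolding A2_def by (simp add: power_one_over)
  qed
  finally show ?thesis using part1 unfolding al_def by simp
qed

end
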